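(* Let $\mathcal{G}$ be a non-trivial hereditary graph class. Then there exists a graph $Z$ such that (1) $Z$ is a block-graph, (2) $Z\notin\mathcal{B}(\mathcal{G})$, and (3) for every $v\in V(Z)$, $Z\setminus v\in\mathcal{B}(\mathcal{G})$.
   Context: All graphs are finite, simple and undirected. A graph is biconnected if every two of its vertices lie on a common cycle. A block of $G$ is an isolated vertex, a bridge (an edge whose removal increases the number of components, with its endpoints), or a maximal biconnected subgraph; $G$ is a block-graph if its only block is $G$ itself. A class is hereditary if closed under induced subgraphs, and non-trivial if it contains at least one non-empty graph and is not the class of all graphs. $\mathcal{B}(\mathcal{G})$ is the class of graphs all of whose blocks belong to $\mathcal{G}$. *)

theory Defs
  imports Main
begin

record ugraph =
  verts :: "nat set"
  edges :: "nat set set"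

definition graph :: "ugraph \<Rightarrow> bool" where
  "graph G \<longleftrightarrow> finite (verts G) \<and>
     (\<forall>e\<in>edges G. \<exists>u v. u \<noteq> v \<and> u \<in> verts G \<and> v \<in> verts G \<and> e = {u, v})"

definition all_graphs :: "ugraph set" where
  "all_graphs = {G. graph G}"

definition induced :: "ugraph \<Rightarrow> nat set \<Rightarrow> ugraph" where
  "induced G S = \<lparr>verts = verts G \<inter> S, edges = {e\<in>edges G. e \<subseteq> S}\<rparr>"

definition delete_vertex :: "ugraph \<Rightarrow> nat \<Rightarrow> ugraph" where
  "delete_vertex G v = induced G (verts G - {v})"

definition subgraph :: "ugraph \<Rightarrow> ugraph \<Rightarrow> bool" where
  "subgraph H G \<longleftrightarrow> graph H \<and> graph G \<and> verts H \<subseteq> verts G \<and> edges H \<subseteq> edges G"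

definition isomorphic :: "ugraph \<Rightarrow> ugraph \<Rightarrow> bool" where
  "isomorphic G H \<longleftrightarrow> (\<exists>f. bij_betw f (verts G) (verts H) \<and>
     (\<forall>u\<in>verts G. \<forall>v\<in>verts G. {u, v} \<in> edges G \<longleftrightarrow> {f u, f v} \<in> edges H))"

definition graph_class :: "ugraph set \<Rightarrow> bool" where
  "graph_class \<G> \<longleftrightarrow> (\<forall>G\<in>\<G>. graph G) \<and>
     (\<forall>G H. G \<in> \<G> \<and> graph H \<and> isomorphic G H \<longrightarrow> H \<in> \<G>)"

definition hereditary :: "ugraph set \<Rightarrow> bool" where
  "hereditary \<G> \<longleftrightarrow> (\<forall>G\<in>\<G>. \<forall>S. S \<subseteq> verts G \<longrightarrow> induced G S \<in> \<G>)"

definition nontrivial :: "ugraph set \<Rightarrow> bool" where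
  "nontrivial \<G> \<longleftrightarrow> (\<exists>G\<in>\<G>. verts G \<noteq> {}) \<and> \<G> \<noteq> all_graphs"

definition is_cycle :: "ugraph \<Rightarrow> nat list \<Rightarrow> bool" where
  "is_cycle G xs \<longleftrightarrow> distinct xs \<and> length xs \<ge> 3 \<and> set xs \<subseteq> verts G \<and>
     (\<forall>i < length xs. {xs ! i, xs ! ((i + 1) mod length xs)} \<in> edges G)"

definition biconnected :: "ugraph \<Rightarrow> bool" where
  "biconnected G \<longleftrightarrow> graph G \<and> card (verts G) \<ge> 2 \<and>
     (\<forall>u\<in>verts G. \<forall>v\<in>verts G. u \<noteq> v \<longrightarrow>
        (\<exists>xs. is_cycle G xs \<and> u \<in> set xs \<and> v \<in> set xs))"

definition conn_rel :: "ugraph \<Rightarrow> (nat \<times> nat) set" where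
  "conn_rel G = {(u, v). u \<in> verts G \<and> v \<in> verts G \<and>
      (u, v) \<in> ({(x, y). {x, y} \<in> edges G})\<^sup>*}"

definition num_components :: "ugraph \<Rightarrow> nat" where
  "num_components G = card (verts G // conn_rel G)"

definition is_bridge :: "ugraph \<Rightarrow> nat set \<Rightarrow> bool" where
  "is_bridge G e \<longleftrightarrow> e \<in> edges G \<and>
     num_components \<lparr>verts = verts G, edges = edges G - {e}\<rparr> > num_components G"

definition is_block :: "ugraph \<Rightarrow> ugraph \<Rightarrow> bool" where
  "is_block G B \<longleftrightarrow> graph G \<and>
     ((\<exists>v\<in>verts G. (\<forall>e\<in>edges G. v \<notin> e) \<and> B = \<lparr>verts = {v}, edges = {}\<rparr>) \<or>
      (\<exists>e. is_bridge G e \<and> B = \<lparr>verts = e, edges = {e}\<rparr>) \<or>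
      (subgraph B G \<and> biconnected B \<and>
         (\<forall>H. subgraph H G \<and> biconnected H \<and> subgraph B H \<longrightarrow> H = B)))"

definition block_graph :: "ugraph \<Rightarrow> bool" where
  "block_graph G \<longleftrightarrow> is_block G G \<and> (\<forall>B. is_block G B \<longrightarrow> B = G)"

definition block_closure :: "ugraph set \<Rightarrow> ugraph set" ("\<B>") where
  "\<B> \<G> = {G. graph G \<and> (\<forall>B. is_block G B \<longrightarrow> B \<in> \<G>)}"

end

theory Submission
  imports Defs
begin

lemma chain_conn:
  assumes "\<forall>k. Suc k < length ys \<longrightarrow> (ys!k, ys!Suc k) \<in> R \<and> (ys!Suc k, ys!k) \<in> R"
    and "a \<in> set ys"
  shows "(hd ys, a) \<in> R\<^sup>* \<and> (a, hd ys) \<in> R\<^sup>*"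
  using assms
proof (induction ys arbitrary: a)
  case Nil then show ?case by simp
next
  case (Cons y ys)
  show ?case
  proof (cases "a = y")
    case True then show ?thesis by simp
  next
    case False
    then have a: "a \<in> set ys" using Cons.prems by simp
    then have ne: "ys \<noteq> []" by auto
    have st: "\<forall>k. Suc k < length ys \<longrightarrow> (ys!k, ys!Suc k) \<in> R \<and> (ys!Suc k, ys!k) \<in> R"
    proof (intro allI impI)
      fix k assume "Suc k < length ys"
      then show "(ys!k, ys!Suc k) \<in> R \<and> (ys!Suc k, ys!k) \<in> R"
        using Cons.prems(1)[rule_format, of "Suc k"] by simp
    qed
    from Cons.IH[OF st a] have ih: "(hd ys, a) \<in> R\<^sup>* \<and> (a, hd ys) \<in> R\<^sup>*" .
    have "(y, hd ys) \<in> R \<and> (hd ys, y) \<in> R"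
      using Cons.prems(1)[rule_format, of 0] ne by (simp add: hd_conv_nth)
    then show ?thesis using ih
      by (metis list.sel(1) converse_rtrancl_into_rtrancl rtrancl.rtrancl_into_rtrancl)
  qed
qed

lemma mod_suc_lt: "m < (n::nat) \<Longrightarrow> Suc m mod n = (if Suc m = n then 0 else Suc m)"
  by (simp add: mod_Suc)

lemma cycle_edges_distinct:
  assumes "distinct xs" "length xs \<ge> 3" "j < length xs" "m < length xs"
    and "{xs!j, xs!(Suc j mod length xs)} = {xs!m, xs!(Suc m mod length xs)}"
  shows "j = m"
proof -
  let ?n = "length xs"
  have n0: "0 < ?n" using assms(2) by linarith
  have sj: "Suc j mod ?n < ?n" "Suc m mod ?n < ?n" using n0 by simp_all
  from assms(5) consider "xs!j = xs!m" | "xs!j = xs!(Suc m mod ?n)" "xs!(Suc j mod ?n) = xs!m"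
    by (auto simp: doubleton_eq_iff)
  then show ?thesis
  proof cases
    case 1 then show ?thesis using assms nth_eq_iff_index_eq by blast
  next
    case 2
    then have "j = Suc m mod ?n" "Suc j mod ?n = m"
      using assms sj nth_eq_iff_index_eq by blast+
    then show ?thesis using assms(2,3,4) by (simp add: mod_suc_lt split: if_splits)
  qed
qed

lemma cycle_conn:
  assumes cyc: "is_cycle Z xs" and a: "a \<in> set xs" and b: "b \<in> set xs"
  shows "(a, b) \<in> {(x, y). {x, y} \<in> edges Z - {e}}\<^sup>*"
proof -
  let ?n = "length xs"
  let ?R = "{(x, y). {x, y} \<in> edges Z - {e}}"
  define c where "c j = {xs!j, xs!(Suc j mod ?n)}" for j
  have dist: "distinct xs" and n3: "?n \<ge> 3" and ed: "\<forall>i<?n. c i \<in> edges Z"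
    using cyc unfolding is_cycle_def c_def by auto
  obtain m where m: "m < ?n" "\<forall>j<?n. j \<noteq> m \<longrightarrow> c j \<noteq> e"
  proof (cases "\<exists>j<?n. c j = e")
    case True
    then obtain m where "m < ?n" "c m = e" by blast
    then show ?thesis using that cycle_edges_distinct[OF dist n3] unfolding c_def by metis
  next
    case False then show ?thesis using that n3 by force
  qed
  define ys where "ys = rotate (Suc m) xs"
  have lys: "length ys = ?n" and sys: "set ys = set xs" unfolding ys_def by auto
  have step: "\<forall>k. Suc k < length ys \<longrightarrow> (ys!k, ys!Suc k) \<in> ?R \<and> (ys!Suc k, ys!k) \<in> ?R"
  proof (intro allI impI)
    fix k assume k: "Suc k < length ys"
    define j where "j = (Suc m + k) mod ?n"
    have n0: "0 < ?n" using n3 by linarith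
    have jl: "j < ?n" unfolding j_def using n0 by simp
    have e1: "ys!k = xs!j" unfolding ys_def j_def
      by (rule nth_rotate) (use k lys in simp)
    have "ys!Suc k = xs!((Suc m + Suc k) mod ?n)" unfolding ys_def
      by (rule nth_rotate) (use k lys in simp)
    then have e2: "ys!Suc k = xs!(Suc j mod ?n)" unfolding j_def
      by (simp add: mod_Suc_eq)
    have jm: "j \<noteq> m"
    proof
      assume "j = m"
      show False
      proof (cases "Suc m + k < ?n")
        case True then show False using \<open>j = m\<close> unfolding j_def by simp
      next
        case False
        then have "(Suc m + k) mod ?n = Suc m + k - ?n" using k lys m(1)
          by (simp add: le_mod_geq)
        then show False using \<open>j = m\<close> k lys unfolding j_def by simp
      qed
    qed
    have "c j \<in> edges Z" "c j \<noteq> e" using ed jl m(2) jm by auto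
    then show "(ys!k, ys!Suc k) \<in> ?R \<and> (ys!Suc k, ys!k) \<in> ?R"
      unfolding c_def e1 e2 by (auto simp: insert_commute)
  qed
  have "(hd ys, a) \<in> ?R\<^sup>* \<and> (a, hd ys) \<in> ?R\<^sup>*" using chain_conn[OF step] a sys by blast
  moreover have "(hd ys, b) \<in> ?R\<^sup>* \<and> (b, hd ys) \<in> ?R\<^sup>*" using chain_conn[OF step] b sys by blast
  ultimately show ?thesis by (meson rtrancl_trans)
qed

lemma graph_edge: "graph G \<Longrightarrow> {x, y} \<in> edges G \<Longrightarrow> x \<noteq> y \<and> x \<in> verts G \<and> y \<in> verts G"
  unfolding graph_def by (metis doubleton_eq_iff)

lemma bicon_no_bridge:
  assumes bc: "biconnected Z"
  shows "\<not> is_bridge Z e"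
proof
  assume br: "is_bridge Z e"
  let ?E = "{(x, y). {x, y} \<in> edges Z}"
  let ?E' = "{(x, y). {x, y} \<in> edges Z - {e}}"
  have gr: "graph Z" using bc unfolding biconnected_def by simp
  have "?E \<subseteq> ?E'\<^sup>*"
  proof
    fix p assume "p \<in> ?E"
    then obtain x y where p: "p = (x, y)" "{x, y} \<in> edges Z" by blast
    show "p \<in> ?E'\<^sup>*"
    proof (cases "{x, y} = e")
      case False then show ?thesis using p by auto
    next
      case True
      have "x \<noteq> y \<and> x \<in> verts Z \<and> y \<in> verts Z" using graph_edge[OF gr p(2)] .
      then obtain xs where "is_cycle Z xs" "x \<in> set xs" "y \<in> set xs"
        using bc unfolding biconnected_def by blast
      then show ?thesis using p cycle_conn by blast
    qed
  qed
  then have "?E\<^sup>* \<subseteq> ?E'\<^sup>*" by (rule rtrancl_subset_rtrancl)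
  moreover have "?E'\<^sup>* \<subseteq> ?E\<^sup>*" by (rule rtrancl_mono) blast
  ultimately have "?E\<^sup>* = ?E'\<^sup>*" by blast
  then have "conn_rel \<lparr>verts = verts Z, edges = edges Z - {e}\<rparr> = conn_rel Z"
    unfolding conn_rel_def by simp
  then show False using br unfolding is_bridge_def num_components_def by simp
qed

lemma bicon_has_edge:
  assumes "biconnected B" "v \<in> verts B"
  shows "\<exists>e\<in>edges B. v \<in> e"
proof -
  have "card (verts B) \<ge> 2" "finite (verts B)" using assms unfolding biconnected_def graph_def by auto
  have "\<exists>u\<in>verts B. u \<noteq> v"
  proof (rule ccontr)
    assume "\<not> ?thesis"
    then have "verts B \<subseteq> {v}" by blast
    then have "card (verts B) \<le> card {v}" by (rule card_mono[rotated]) simp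
    then show False using \<open>card (verts B) \<ge> 2\<close> by simp
  qed
  then obtain u where u: "u \<in> verts B" "u \<noteq> v" by blast
  then obtain xs where xs: "is_cycle B xs" "v \<in> set xs"
    using assms unfolding biconnected_def by blast
  then obtain i where i: "i < length xs" "xs!i = v" by (meson in_set_conv_nth)
  have "{xs!i, xs!(Suc i mod length xs)} \<in> edges B" using xs(1) i(1) unfolding is_cycle_def by simp
  then show ?thesis using i(2) by blast
qed

lemma subgraph_antisym: "subgraph A B \<Longrightarrow> subgraph B A \<Longrightarrow> A = B"
  unfolding subgraph_def by (intro ugraph.equality) auto

lemma bicon_block_graph:
  assumes bc: "biconnected Z"
  shows "block_graph Z"
proof -
  have gr: "graph Z" using bc unfolding biconnected_def by simp
  have sZ: "subgraph Z Z" using gr unfolding subgraph_def by simp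
  have "is_block Z Z" unfolding is_block_def using gr sZ bc subgraph_antisym by blast
  moreover have "B = Z" if "is_block Z B" for B
  proof -
    have "\<not> (\<exists>v\<in>verts Z. (\<forall>e\<in>edges Z. v \<notin> e))" using bicon_has_edge[OF bc] by blast
    moreover have "\<not> is_bridge Z e" for e using bicon_no_bridge[OF bc] .
    ultimately have "subgraph B Z \<and> biconnected B \<and>
         (\<forall>H. subgraph H Z \<and> biconnected H \<and> subgraph B H \<longrightarrow> H = B)"
      using that unfolding is_block_def by blast
    then show "B = Z" using sZ bc by blast
  qed
  ultimately show ?thesis unfolding block_graph_def by blast
qed

lemma induced_graph: 
  assumes "graph G" shows "graph (induced G S)"
  unfolding graph_def induced_def ugraph.select_convs
proof (intro conjI ballI)
  show "finite (verts G \<inter> S)" using assms unfolding graph_def by simp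
next
  fix e assume e: "e \<in> {e \<in> edges G. e \<subseteq> S}"
  then have e1: "e \<in> edges G" and e2: "e \<subseteq> S" by simp_all
  obtain u v where uv: "u \<noteq> v" "u \<in> verts G" "v \<in> verts G" "e = {u, v}"
    using assms e1 unfolding graph_def by blast
  then have "u \<in> S" "v \<in> S" using e2 by simp_all
  then show "\<exists>u v. u \<noteq> v \<and> u \<in> verts G \<inter> S \<and> v \<in> verts G \<inter> S \<and> e = {u, v}" using uv by blast
qed

lemma gc_iso: "graph_class \<G> \<Longrightarrow> X \<in> \<G> \<Longrightarrow> graph Y \<Longrightarrow> isomorphic X Y \<Longrightarrow> Y \<in> \<G>"
  unfolding graph_class_def by blast

lemma gc_graph: "graph_class \<G> \<Longrightarrow> X \<in> \<G> \<Longrightarrow> graph X"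
  unfolding graph_class_def by blast

lemma her_ind: "hereditary \<G> \<Longrightarrow> X \<in> \<G> \<Longrightarrow> S \<subseteq> verts X \<Longrightarrow> induced X S \<in> \<G>"
  unfolding hereditary_def by simp

lemma no_empty_edge: 
  assumes "graph G" shows "{} \<notin> edges G"
proof
  assume "{} \<in> edges G"
  then obtain u v where "{} = {u, v}" using assms unfolding graph_def by blast
  then show False by simp
qed

lemma empty_in:
  assumes "graph_class \<G>" "hereditary \<G>" "nontrivial \<G>"
  shows "\<lparr>verts = {}, edges = {}\<rparr> \<in> \<G>"
proof -
  obtain G0 where G0: "G0 \<in> \<G>" using assms(3) unfolding nontrivial_def by blast
  then have gr: "graph G0" using assms(1) gc_graph by blast
  have "induced G0 {} \<in> \<G>" using assms(2) G0 her_ind by blast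
  moreover have "induced G0 {} = \<lparr>verts = {}, edges = {}\<rparr>"
  proof -
    have "{e \<in> edges G0. e \<subseteq> {}} = {}" using no_empty_edge[OF gr] by auto
    then show ?thesis unfolding induced_def by simp
  qed
  ultimately show ?thesis by simp
qed

lemma single_in:
  assumes "graph_class \<G>" "hereditary \<G>" "nontrivial \<G>"
  shows "\<lparr>verts = {w}, edges = {}\<rparr> \<in> \<G>"
proof -
  obtain G0 w0 where G0: "G0 \<in> \<G>" "w0 \<in> verts G0" using assms(3) unfolding nontrivial_def by blast
  then have gr: "graph G0" using assms(1) gc_graph by blast
  have "induced G0 {w0} \<in> \<G>" using assms(2) G0 her_ind by blast
  moreover have "induced G0 {w0} = \<lparr>verts = {w0}, edges = {}\<rparr>"
  proof -
    have "{e \<in> edges G0. e \<subseteq> {w0}} = {}"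
    proof safe
      fix e assume "e \<in> edges G0" "e \<subseteq> {w0}"
      then obtain u v where "u \<noteq> v" "e = {u, v}" using gr unfolding graph_def by blast
      then show "e \<in> {}" using \<open>e \<subseteq> {w0}\<close> by auto
    qed
    moreover have "verts G0 \<inter> {w0} = {w0}" using G0 by blast
    ultimately show ?thesis unfolding induced_def by simp
  qed
  ultimately have inG: "\<lparr>verts = {w0}, edges = {}\<rparr> \<in> \<G>" by simp
  have "isomorphic \<lparr>verts = {w0}, edges = {}\<rparr> \<lparr>verts = {w}, edges = {}\<rparr>"
    unfolding isomorphic_def by (rule exI[of _ "\<lambda>_. w"]) (simp add: bij_betw_def)
  moreover have "graph \<lparr>verts = {w}, edges = {}\<rparr>" unfolding graph_def by simp
  ultimately show ?thesis using inG assms(1) gc_iso by blast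
qed

lemma K2_iso:
  assumes "graph_class \<G>" "\<lparr>verts = {0, 1}, edges = {{0, 1}}\<rparr> \<in> \<G>" "p \<noteq> q"
  shows "\<lparr>verts = {p, q}, edges = {{p, q}}\<rparr> \<in> \<G>"
proof -
  let ?f = "\<lambda>x::nat. if x = 0 then p else q"
  have "inj_on ?f {0, 1}" using assms(3) unfolding inj_on_def by simp
  moreover have "?f ` {0, 1} = {p, q}" by auto
  ultimately have "bij_betw ?f {0, 1} {p, q}" unfolding bij_betw_def by blast
  moreover have "\<forall>u\<in>{0::nat, 1}. \<forall>v\<in>{0::nat, 1}. {u, v} \<in> {{0, 1}} \<longleftrightarrow> {?f u, ?f v} \<in> {{p, q}}"
  proof (intro ballI)
    fix u v :: nat assume "u \<in> {0, 1}" "v \<in> {0, 1}"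
    then consider "u = 0" "v = 0" | "u = 0" "v = 1" | "u = 1" "v = 0" | "u = 1" "v = 1" by blast
    then show "{u, v} \<in> {{0, 1}} \<longleftrightarrow> {?f u, ?f v} \<in> {{p, q}}"
      by cases (use assms(3) in \<open>simp_all add: doubleton_eq_iff insert_commute\<close>)
  qed
  ultimately have "isomorphic \<lparr>verts = {0, 1}, edges = {{0, 1}}\<rparr> \<lparr>verts = {p, q}, edges = {{p, q}}\<rparr>"
    unfolding isomorphic_def by auto
  moreover have "graph \<lparr>verts = {p, q}, edges = {{p, q}}\<rparr>" unfolding graph_def using assms(3) by auto
  ultimately show ?thesis using assms(1,2) gc_iso by blast
qed

lemma cyc3:
  assumes "distinct [p, q, r]" "p \<in> verts G" "q \<in> verts G" "r \<in> verts G"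
    "{p, q} \<in> edges G" "{q, r} \<in> edges G" "{r, p} \<in> edges G"
  shows "is_cycle G [p, q, r]"
  unfolding is_cycle_def
proof (intro conjI allI impI)
  fix i assume "i < length [p, q, r]"
  then have "i = 0 \<or> i = 1 \<or> i = 2" by auto
  then show "{[p, q, r] ! i, [p, q, r] ! ((i + 1) mod length [p, q, r])} \<in> edges G"
    using assms by auto
qed (use assms in auto)

lemma cyc4:
  assumes "distinct [p, q, r, s]" "p \<in> verts G" "q \<in> verts G" "r \<in> verts G" "s \<in> verts G"
    "{p, q} \<in> edges G" "{q, r} \<in> edges G" "{r, s} \<in> edges G" "{s, p} \<in> edges G"
  shows "is_cycle G [p, q, r, s]"
  unfolding is_cycle_def
proof (intro conjI allI impI)
  fix i assume "i < length [p, q, r, s]"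
  then have "i = 0 \<or> i = 1 \<or> i = 2 \<or> i = 3" by auto
  then show "{[p, q, r, s] ! i, [p, q, r, s] ! ((i + 1) mod length [p, q, r, s])} \<in> edges G"
    using assms by auto
qed (use assms in auto)

lemma graph_edgeE:
  assumes "graph G" "e \<in> edges G"
  obtains u v where "u \<noteq> v" "u \<in> verts G" "v \<in> verts G" "e = {u, v}"
proof -
  have "\<forall>e\<in>edges G. \<exists>u v. u \<noteq> v \<and> u \<in> verts G \<and> v \<in> verts G \<and> e = {u, v}"
    using assms(1) unfolding graph_def by (rule conjunct2)
  then have "\<exists>u v. u \<noteq> v \<and> u \<in> verts G \<and> v \<in> verts G \<and> e = {u, v}" using assms(2) by (rule bspec)
  then show ?thesis using that by blast
qed

lemma exists_bicon_notin:
  assumes gc: "graph_class \<G>" and he: "hereditary \<G>" and nt: "nontrivial \<G>"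
  shows "\<exists>Z. biconnected Z \<and> Z \<notin> \<G>"
proof -
  obtain H where H: "graph H" "H \<notin> \<G>"
  proof -
    have "\<G> \<noteq> all_graphs" using nt unfolding nontrivial_def by simp
    moreover have "\<G> \<subseteq> all_graphs" using gc_graph[OF gc] unfolding all_graphs_def by blast
    ultimately obtain H where "H \<in> all_graphs" "H \<notin> \<G>" by blast
    then show ?thesis using that unfolding all_graphs_def by simp
  qed
  have fin: "finite (verts H)" using H(1) unfolding graph_def by simp
  have ne: "verts H \<noteq> {}"
  proof
    assume e: "verts H = {}"
    have "edges H = {}"
    proof (rule ccontr)
      assume "edges H \<noteq> {}"
      then obtain x where "x \<in> edges H" by blast
      then obtain u v where "u \<in> verts H" by (rule graph_edgeE[OF H(1)])
      then show False using e by blast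
    qed
    then have "H = \<lparr>verts = {}, edges = {}\<rparr>" using e by (intro ugraph.equality) simp_all
    then show False using H(2) empty_in[OF gc he nt] by simp
  qed
  define M where "M = Max (insert 0 (verts H))"
  define a where "a = Suc M"
  define b where "b = Suc a"
  have le: "x \<le> M" if "x \<in> verts H" for x unfolding M_def using fin that by simp
  have aH: "a \<notin> verts H" using le unfolding a_def by (meson Suc_n_not_le_n)
  have bH: "b \<notin> verts H" using le unfolding b_def a_def by (metis Suc_n_not_le_n le_SucI)
  have ab: "a \<noteq> b" unfolding b_def by simp
  define E' where "E' = edges H \<union> (\<lambda>x. {x, a}) ` verts H \<union> (\<lambda>x. {x, b}) ` verts H \<union> {{a, b}}"
  define H' where "H' = \<lparr>verts = verts H \<union> {a, b}, edges = E'\<rparr>"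
  have vH': "verts H' = verts H \<union> {a, b}" and eH': "edges H' = E'"
    unfolding H'_def by simp_all
  have ea: "{x, a} \<in> E'" "{a, x} \<in> E'" "{x, b} \<in> E'" "{b, x} \<in> E'" if "x \<in> verts H" for x
    unfolding E'_def using that by (auto simp: insert_commute)
  have eab: "{a, b} \<in> E'" "{b, a} \<in> E'" unfolding E'_def by (auto simp: insert_commute)
  have gH': "graph H'"
    unfolding graph_def
  proof (intro conjI ballI)
    show "finite (verts H')" unfolding vH' using fin by simp
  next
    fix e assume e: "e \<in> edges H'"
    have "e \<in> edges H \<or> (\<exists>x\<in>verts H. e = {x, a}) \<or> (\<exists>x\<in>verts H. e = {x, b}) \<or> e = {a, b}"
      using e unfolding eH' E'_def by blast
    then show "\<exists>u v. u \<noteq> v \<and> u \<in> verts H' \<and> v \<in> verts H' \<and> e = {u, v}"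
    proof (elim disjE)
      assume "e \<in> edges H"
      then obtain u v where "u \<noteq> v" "u \<in> verts H" "v \<in> verts H" "e = {u, v}"
        by (rule graph_edgeE[OF H(1)])
      then show ?thesis unfolding vH' by blast
    next
      assume "\<exists>x\<in>verts H. e = {x, a}"
      then obtain x where "x \<in> verts H" "e = {x, a}" by blast
      moreover then have "x \<noteq> a" using aH by blast
      ultimately show ?thesis unfolding vH' by blast
    next
      assume "\<exists>x\<in>verts H. e = {x, b}"
      then obtain x where "x \<in> verts H" "e = {x, b}" by blast
      moreover then have "x \<noteq> b" using bH by blast
      ultimately show ?thesis unfolding vH' by blast
    next
      assume "e = {a, b}"
      then show ?thesis using ab unfolding vH' by blast
    qed
  qed
  have ind: "induced H' (verts H) = H"
  proof -
    have sub: "e \<subseteq> verts H" if ee: "e \<in> edges H" for e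
    proof -
      obtain u v where "u \<in> verts H" "v \<in> verts H" "e = {u, v}"
        using graph_edgeE[OF H(1) ee] by metis
      then show ?thesis by simp
    qed
    have "{e \<in> E'. e \<subseteq> verts H} = edges H"
    proof
      show "{e \<in> E'. e \<subseteq> verts H} \<subseteq> edges H"
      proof
        fix e assume "e \<in> {e \<in> E'. e \<subseteq> verts H}"
        then have "e \<in> E'" "e \<subseteq> verts H" by simp_all
        then show "e \<in> edges H" unfolding E'_def using aH bH by blast
      qed
      show "edges H \<subseteq> {e \<in> E'. e \<subseteq> verts H}" using sub unfolding E'_def by blast
    qed
    moreover have "verts H' \<inter> verts H = verts H" unfolding vH' by blast
    ultimately show ?thesis unfolding induced_def eH' by (intro ugraph.equality) simp_all
  qed
  have tri: "is_cycle H' [w, a, b]" if w: "w \<in> verts H" for w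
  proof (rule cyc3)
    show "distinct [w, a, b]" using w aH bH ab by auto
  qed (simp_all add: vH' eH' ea[OF w] eab w)
  have bic: "biconnected H'"
    unfolding biconnected_def
  proof (intro conjI ballI impI)
    show "graph H'" by fact
    have "card {a, b} \<le> card (verts H')" using fin by (intro card_mono) (simp_all add: vH')
    then show "2 \<le> card (verts H')" using ab by simp
  next
    fix u v assume u: "u \<in> verts H'" and v: "v \<in> verts H'" and uv: "u \<noteq> v"
    show "\<exists>xs. is_cycle H' xs \<and> u \<in> set xs \<and> v \<in> set xs"
    proof (cases "u \<in> verts H \<and> v \<in> verts H")
      case True
      have "is_cycle H' [u, a, v, b]"
      proof (rule cyc4)
        show "distinct [u, a, v, b]" using True uv aH bH ab by auto
      qed (use True in \<open>simp_all add: vH' eH' ea eab\<close>)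
      then show ?thesis by auto
    next
      case False
      obtain w where w: "w \<in> verts H" "u \<in> {w, a, b}" "v \<in> {w, a, b}"
      proof (cases "u \<in> verts H")
        case True
        then have "v \<in> {a, b}" using False v unfolding vH' by blast
        then show ?thesis by (intro that[OF True]) simp_all
      next
        case f: False
        then have u': "u \<in> {a, b}" using u unfolding vH' by blast
        show ?thesis
        proof (cases "v \<in> verts H")
          case True then show ?thesis using u' by (intro that[OF True]) simp_all
        next
          case False
          then have "v \<in> {a, b}" using v unfolding vH' by blast
          obtain w where "w \<in> verts H" using ne by blast
          then show ?thesis using u' \<open>v \<in> {a, b}\<close> by (intro that) simp_all
        qed
      qed
      show ?thesis by (intro exI[of _ "[w, a, b]"]) (use tri[OF w(1)] w(2,3) in simp)
    qed
  qed
  have "H' \<notin> \<G>"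
  proof
    assume "H' \<in> \<G>"
    then have "induced H' (verts H) \<in> \<G>" by (rule her_ind[OF he]) (auto simp: vH')
    then show False using ind H(2) by simp
  qed
  then show ?thesis using bic by blast
qed

lemma conn_rel_noedge: "conn_rel \<lparr>verts = V, edges = {}\<rparr> = Id_on V"
  unfolding conn_rel_def by (auto simp: Id_on_def)

lemma conn_rel_K2: "conn_rel \<lparr>verts = {0::nat, 1}, edges = {{0, 1}}\<rparr> = {0::nat, 1} \<times> {0, 1}"
proof -
  let ?R = "{(x::nat, y). {x, y} \<in> {{0::nat, 1}}}"
  have "(0, 1) \<in> ?R" by simp
  moreover have "(1, 0) \<in> ?R" by (simp add: insert_commute)
  ultimately have "(0, 1) \<in> ?R\<^sup>*" "(1, 0) \<in> ?R\<^sup>*" by auto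
  then show ?thesis unfolding conn_rel_def by auto
qed

lemma K2_bridge: "is_bridge \<lparr>verts = {0::nat, 1}, edges = {{0, 1}}\<rparr> {0, 1}"
proof -
  have e: "\<lparr>verts = verts \<lparr>verts = {0::nat, 1}, edges = {{0::nat, 1}}\<rparr>,
        edges = edges \<lparr>verts = {0::nat, 1}, edges = {{0::nat, 1}}\<rparr> - {{0, 1}}\<rparr>
      = \<lparr>verts = {0::nat, 1}, edges = {}\<rparr>" by simp
  have q1: "{0::nat, 1} // Id_on {0, 1} = {{0}, {1}}" unfolding quotient_def by auto
  have q2: "{0::nat, 1} // ({0, 1} \<times> {0, 1}) = {{0, 1}}" unfolding quotient_def by auto
  have n1: "num_components \<lparr>verts = {0::nat, 1}, edges = {}\<rparr> = 2"
    unfolding num_components_def conn_rel_noedge ugraph.select_convs q1 by simp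
  have n2: "num_components \<lparr>verts = {0::nat, 1}, edges = {{0::nat, 1}}\<rparr> = 1"
    unfolding num_components_def conn_rel_K2 ugraph.select_convs q2 by simp
  show ?thesis unfolding is_bridge_def e n1 n2 by simp
qed

lemma K2_graph: "graph \<lparr>verts = {0::nat, 1}, edges = {{0, 1}}\<rparr>"
  unfolding graph_def by auto

lemma no_bicon_small:
  assumes "biconnected B" "verts B \<subseteq> V" "finite V" "card V \<le> 2"
  shows False
proof -
  obtain u v where "u \<in> verts B" "v \<in> verts B" "u \<noteq> v"
  proof -
    obtain u where u: "u \<in> verts B" using assms(1) unfolding biconnected_def
      by (metis card.empty ex_in_conv not_numeral_le_zero)
    then show ?thesis using bicon_has_edge[OF assms(1) u] that assms(1)
      unfolding biconnected_def by (meson graph_edgeE insertI1 insert_commute insertE singletonD)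
  qed
  then obtain xs where xs: "is_cycle B xs" using assms(1) unfolding biconnected_def by blast
  then have "card (set xs) = length xs" "length xs \<ge> 3" "set xs \<subseteq> V"
    using assms(2) unfolding is_cycle_def by (auto simp: distinct_card)
  moreover have "card (set xs) \<le> card V" using calculation(3) assms(3) by (rule card_mono[rotated])
  ultimately show False using assms(4) by simp
qed

lemma K2_block_graph: "block_graph \<lparr>verts = {0::nat, 1}, edges = {{0, 1}}\<rparr>"
proof -
  let ?K = "\<lparr>verts = {0::nat, 1}, edges = {{0::nat, 1}}\<rparr>"
  have "is_block ?K ?K" unfolding is_block_def using K2_graph K2_bridge by blast
  moreover have "B = ?K" if b: "is_block ?K B" for B
  proof -
    have "\<not> (\<exists>v\<in>verts ?K. \<forall>e\<in>edges ?K. v \<notin> e)" by simp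
    moreover have "\<not> (subgraph B ?K \<and> biconnected B)"
    proof
      assume "subgraph B ?K \<and> biconnected B"
      then show False using no_bicon_small[of B "{0::nat, 1}"] unfolding subgraph_def by simp
    qed
    ultimately obtain e where "is_bridge ?K e" "B = \<lparr>verts = e, edges = {e}\<rparr>"
      using b unfolding is_block_def by blast
    then show ?thesis unfolding is_bridge_def by simp
  qed
  ultimately show ?thesis unfolding block_graph_def by blast
qed

lemma noedge_blocks:
  assumes "edges X = {}" "is_block X B"
  shows "\<exists>w. B = \<lparr>verts = {w}, edges = {}\<rparr>"
proof -
  have "\<not> is_bridge X e" for e using assms(1) unfolding is_bridge_def by simp
  moreover have "\<not> (subgraph B X \<and> biconnected B)"
  proof
    assume a: "subgraph B X \<and> biconnected B"
    then have "card (verts B) \<ge> 2" unfolding biconnected_def by simp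
    then obtain u where u: "u \<in> verts B" by (metis card.empty ex_in_conv not_numeral_le_zero)
    then obtain e where "e \<in> edges B" using bicon_has_edge a by blast
    then show False using a assms(1) unfolding subgraph_def by blast
  qed
  ultimately show ?thesis using assms(2) unfolding is_block_def by blast
qed

lemma block_graph_notin:
  assumes "block_graph Z" "Z \<notin> \<G>" shows "Z \<notin> \<B> \<G>"
  using assms unfolding block_graph_def block_closure_def by blast

theorem lemma3:
  fixes \<G> :: "ugraph set"
  assumes "graph_class \<G>" and "hereditary \<G>" and "nontrivial \<G>"
  shows "\<exists>Z. graph Z \<and> block_graph Z \<and> Z \<notin> \<B> \<G> \<and>
           (\<forall>v\<in>verts Z. delete_vertex Z v \<in> \<B> \<G>)"
proof (cases "\<lparr>verts = {0::nat, 1}, edges = {{0::nat, 1}}\<rparr> \<in> \<G>")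
  case K2: True
  obtain Z0 where "biconnected Z0 \<and> Z0 \<notin> \<G>" using exists_bicon_notin[OF assms] by blast
  then obtain Z where Z: "biconnected Z" "Z \<notin> \<G>"
    and minZ: "\<And>Y. biconnected Y \<and> Y \<notin> \<G> \<Longrightarrow> card (verts Z) \<le> card (verts Y)"
    using ex_has_least_nat[of "\<lambda>Z. biconnected Z \<and> Z \<notin> \<G>" Z0 "\<lambda>Z. card (verts Z)"] by blast
  have gZ: "graph Z" using Z(1) unfolding biconnected_def by simp
  have bg: "block_graph Z" using bicon_block_graph[OF Z(1)] .
  have "delete_vertex Z v \<in> \<B> \<G>" if v: "v \<in> verts Z" for v
  proof -
    let ?D = "delete_vertex Z v"
    have gD: "graph ?D" unfolding delete_vertex_def using induced_graph[OF gZ] .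
    have vD: "verts ?D = verts Z - {v}" unfolding delete_vertex_def induced_def by auto
    have finZ: "finite (verts Z)" using gZ unfolding graph_def by simp
    have "B \<in> \<G>" if b: "is_block ?D B" for B
    proof -
      consider (iso) w where "B = \<lparr>verts = {w}, edges = {}\<rparr>"
        | (br) e where "is_bridge ?D e" "B = \<lparr>verts = e, edges = {e}\<rparr>"
        | (bc) "subgraph B ?D" "biconnected B"
        using b unfolding is_block_def by blast
      then show ?thesis
      proof cases
        case iso then show ?thesis using single_in[OF assms] by simp
      next
        case br
        then have "e \<in> edges ?D" unfolding is_bridge_def by simp
        then obtain p q where "p \<noteq> q" "e = {p, q}" by (rule graph_edgeE[OF gD])
        then show ?thesis using K2_iso[OF assms(1) K2] br(2) by simp
      next
        case bc
        show ?thesis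
        proof (rule ccontr)
          assume "B \<notin> \<G>"
          then have "card (verts Z) \<le> card (verts B)" using minZ bc(2) by blast
          moreover have "card (verts B) \<le> card (verts ?D)"
            using bc(1) finZ unfolding subgraph_def vD by (intro card_mono) auto
          moreover have "card (verts ?D) < card (verts Z)"
            unfolding vD using finZ v by (rule card_Diff1_less)
          ultimately show False by simp
        qed
      qed
    qed
    then show ?thesis using gD unfolding block_closure_def by blast
  qed
  then show ?thesis using gZ bg block_graph_notin[OF bg Z(2)] by blast
next
  case False
  let ?K = "\<lparr>verts = {0::nat, 1}, edges = {{0::nat, 1}}\<rparr>"
  have "delete_vertex ?K v \<in> \<B> \<G>" if v: "v \<in> verts ?K" for v
  proof -
    let ?D = "delete_vertex ?K v"
    have gD: "graph ?D" unfolding delete_vertex_def using induced_graph[OF K2_graph] .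
    have eD: "edges ?D = {}" using v unfolding delete_vertex_def induced_def by auto
    have "B \<in> \<G>" if b: "is_block ?D B" for B
      using noedge_blocks[OF eD b] single_in[OF assms] by auto
    then show ?thesis using gD unfolding block_closure_def by blast
  qed
  then show ?thesis using K2_graph K2_block_graph block_graph_notin[OF K2_block_graph False] by blast
qed

end
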